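(* For any $k \in \mathbb{N}$ and $n_1,\ldots,n_k \in \mathbb{N}$, $R_\mathrm{cyc}(S_{n_1},\ldots,S_{n_k}) = R(S_{n_1},\ldots,S_{n_k})$, where each $S_{n_j}$ is any star graph of order $n_j$.
   Context: All graphs are finite, simple and undirected, and a graph of order $n$ has vertex set $\{0,1,\ldots,n-1\}$; $K_n$ is the complete graph on $\{0,\ldots,n-1\}$. A $k$-edge-coloring of $K_n$ assigns each edge a color in $\{1,\ldots,k\}$. For a graph $H$ and such a coloring, an embedding of $H$ in color $j$ is an injective map $\varphi\colon V(H)\to V(K_n)$ such that for every edge $uv$ of $H$ the edge $\{\varphi(u),\varphi(v)\}$ has color $j$; it is increasing up to a cyclic permutation if there exists $t\in V(H)$ such that $(\varphi(t),\ldots,\varphi(|H|-1),\varphi(0),\ldots,\varphi(t-1))$ is increasing. $R(H_1,\ldots,H_k)$ is the smallest $n$ such that every $k$-edge-coloring of $K_n$ admits, for some $j$, an embedding of $H_j$ in color $j$; $R_\mathrm{cyc}$ is defined in the same way but requiring the embedding to be increasing up to a cyclic permutation. A star graph of order $n$ is a graph on $\{0,\ldots,n-1\}$ in which one vertex (the center, arbitrary) is adjacent to all others and there are no other edges. *)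

theory Defs
  imports Main
begin

text \<open>A finite simple graph of order n on vertex set {0..<n}: a pair (n, E) where
  E is a set of 2-element subsets of {0..<n}.\<close>
type_synonym graph = "nat \<times> nat set set"

definition order :: "graph \<Rightarrow> nat" where "order H = fst H"
definition edges :: "graph \<Rightarrow> nat set set" where "edges H = snd H"

definition simple_graph :: "graph \<Rightarrow> bool" where
  "simple_graph H \<longleftrightarrow> (\<forall>e\<in>edges H. e \<subseteq> {0..<order H} \<and> card e = 2)"

definition is_star :: "graph \<Rightarrow> bool" where
  "is_star H \<longleftrightarrow> (\<exists>c<order H. edges H = {{c, v} | v. v < order H \<and> v \<noteq> c})"

definition is_coloring :: "nat \<Rightarrow> nat \<Rightarrow> (nat set \<Rightarrow> nat) \<Rightarrow> bool" where
  "is_coloring k N col \<longleftrightarrow>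
     (\<forall>u v. u < N \<longrightarrow> v < N \<longrightarrow> u \<noteq> v \<longrightarrow> col {u, v} \<in> {1..k})"

definition embedding :: "nat \<Rightarrow> (nat set \<Rightarrow> nat) \<Rightarrow> graph \<Rightarrow> nat \<Rightarrow> (nat \<Rightarrow> nat) \<Rightarrow> bool" where
  "embedding N col H j \<phi> \<longleftrightarrow>
     inj_on \<phi> {0..<order H} \<and> \<phi> ` {0..<order H} \<subseteq> {0..<N} \<and>
     (\<forall>u v. {u, v} \<in> edges H \<longrightarrow> col {\<phi> u, \<phi> v} = j)"

definition cyc_increasing :: "nat \<Rightarrow> (nat \<Rightarrow> nat) \<Rightarrow> bool" where
  "cyc_increasing n \<phi> \<longleftrightarrow>
     (\<exists>t<n. \<forall>i j. i < j \<longrightarrow> j < n \<longrightarrow> \<phi> ((t + i) mod n) < \<phi> ((t + j) mod n))"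

definition ramsey_prop :: "nat \<Rightarrow> (nat \<Rightarrow> graph) \<Rightarrow> nat \<Rightarrow> bool" where
  "ramsey_prop k Hs N \<longleftrightarrow>
     (\<forall>col. is_coloring k N col \<longrightarrow> (\<exists>j\<in>{1..k}. \<exists>\<phi>. embedding N col (Hs j) j \<phi>))"

definition ramsey_cyc_prop :: "nat \<Rightarrow> (nat \<Rightarrow> graph) \<Rightarrow> nat \<Rightarrow> bool" where
  "ramsey_cyc_prop k Hs N \<longleftrightarrow>
     (\<forall>col. is_coloring k N col \<longrightarrow>
        (\<exists>j\<in>{1..k}. \<exists>\<phi>. embedding N col (Hs j) j \<phi> \<and> cyc_increasing (order (Hs j)) \<phi>))"

definition ramsey_num :: "nat \<Rightarrow> (nat \<Rightarrow> graph) \<Rightarrow> nat" where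
  "ramsey_num k Hs = (LEAST N. ramsey_prop k Hs N)"

definition ramsey_cyc_num :: "nat \<Rightarrow> (nat \<Rightarrow> graph) \<Rightarrow> nat" where
  "ramsey_cyc_num k Hs = (LEAST N. ramsey_cyc_prop k Hs N)"

end

theory Submission
  imports Defs
begin

lemma mod_shift_inj:
  fixes n a :: nat
  shows "inj_on (\<lambda>i. (i + a) mod n) {0..<n}"
proof (rule inj_onI)
  fix x y assume x: "x \<in> {0..<n}" and y: "y \<in> {0..<n}" and e: "(x + a) mod n = (y + a) mod n"
  have "int ((x + a) mod n) = int ((y + a) mod n)" using e by simp
  then have "(int x + int a) mod int n = (int y + int a) mod int n" by (simp add: zmod_int)
  then have "((int x + int a) mod int n - int a) mod int n = ((int y + int a) mod int n - int a) mod int n" by simp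
  then have "int x mod int n = int y mod int n" by (simp add: mod_diff_left_eq)
  then show "x = y" using x y by simp
qed

lemma star_cyc:
  assumes st: "is_star H" and emb: "embedding N col H j \<phi>"
  shows "\<exists>\<psi>. embedding N col H j \<psi> \<and> cyc_increasing (order H) \<psi>"
proof -
  define n where "n = order H"
  obtain c where c: "c < n" and E: "edges H = {{c, v} | v. v < n \<and> v \<noteq> c}"
    using st unfolding is_star_def n_def by blast
  have inj: "inj_on \<phi> {0..<n}" and img: "\<phi> ` {0..<n} \<subseteq> {0..<N}"
    and ecol: "\<And>u v. {u, v} \<in> edges H \<Longrightarrow> col {\<phi> u, \<phi> v} = j"
    using emb unfolding embedding_def n_def by auto
  define S where "S = \<phi> ` {0..<n}"
  define xs where "xs = sorted_list_of_set S"
  have fS: "finite S" unfolding S_def by simp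
  have cS: "card S = n" unfolding S_def using inj card_image by fastforce
  have lxs: "length xs = n" unfolding xs_def using cS by simp
  have sxs: "set xs = S" unfolding xs_def using fS by simp
  have dxs: "distinct xs" unfolding xs_def by simp
  have ssxs: "sorted_wrt (<) xs" unfolding xs_def by simp
  have "\<phi> c \<in> set xs" using sxs c S_def by auto
  then obtain m where m: "m < n" and xm: "xs ! m = \<phi> c"
    by (metis in_set_conv_nth lxs)
  define f where "f i = (i + (m + (n - c))) mod n" for i
  define \<psi> where "\<psi> i = xs ! f i" for i
  have n0: "n > 0" using c by simp
  have finj: "inj_on f {0..<n}" unfolding f_def by (rule mod_shift_inj)
  have frange: "f i < n" for i unfolding f_def using n0 by simp
  have psiS: "\<psi> i \<in> S" for i unfolding \<psi>_def using frange lxs sxs by (metis nth_mem)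
  have psiinj: "inj_on \<psi> {0..<n}"
  proof (rule inj_onI)
    fix x y assume x: "x \<in> {0..<n}" and y: "y \<in> {0..<n}" and e: "\<psi> x = \<psi> y"
    then have "f x = f y" unfolding \<psi>_def using dxs lxs frange nth_eq_iff_index_eq by metis
    then show "x = y" using finj x y by (meson inj_onD)
  qed
  have fc: "f c = m" unfolding f_def using c m by simp
  have psic: "\<psi> c = \<phi> c" unfolding \<psi>_def fc xm ..
  have embp: "embedding N col H j \<psi>"
    unfolding embedding_def n_def[symmetric]
  proof (intro conjI allI impI)
    show "inj_on \<psi> {0..<n}" by (rule psiinj)
    show "\<psi> ` {0..<n} \<subseteq> {0..<N}" using psiS img S_def by blast
    fix u v assume uv: "{u, v} \<in> edges H"
    then obtain w where w: "w < n" "w \<noteq> c" and uvw: "{u, v} = {c, w}" using E by auto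
    have "\<psi> w \<noteq> \<psi> c" using psiinj w c by (meson atLeastLessThan_iff inj_onD zero_le)
    moreover obtain w' where w': "w' < n" "\<psi> w = \<phi> w'" using psiS[of w] S_def by auto
    ultimately have "w' \<noteq> c" using psic by auto
    then have "{c, w'} \<in> edges H" using E w' by auto
    then have "col {\<phi> c, \<phi> w'} = j" by (rule ecol)
    then have "col {\<psi> c, \<psi> w} = j" using psic w' by simp
    moreover have "{\<psi> u, \<psi> v} = {\<psi> c, \<psi> w}" using uvw by (auto simp: doubleton_eq_iff)
    ultimately show "col {\<psi> u, \<psi> v} = j" by simp
  qed
  define t where "t = (c + n - m) mod n"
  have ft: "f ((t + i) mod n) = i" if "i < n" for i
  proof -
    have "f ((t + i) mod n) = ((t + i) + (m + (n - c))) mod n"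
      unfolding f_def by (simp add: mod_add_left_eq)
    also have "\<dots> = ((c + n - m) + i + (m + (n - c))) mod n"
      unfolding t_def by (metis add.assoc mod_add_left_eq)
    also have "(c + n - m) + i + (m + (n - c)) = i + 2 * n" using c m by simp
    finally show ?thesis using that by simp
  qed
  have "cyc_increasing n \<psi>"
    unfolding cyc_increasing_def
  proof (intro exI[of _ t] conjI allI impI)
    show "t < n" unfolding t_def using n0 by simp
    fix i j assume "i < j" "j < n"
    then show "\<psi> ((t + i) mod n) < \<psi> ((t + j) mod n)"
      unfolding \<psi>_def using ft ssxs lxs by (simp add: sorted_wrt_iff_nth_less)
  qed
  then show ?thesis using embp n_def by blast
qed

theorem proposition2p2:
  fixes k :: nat and ns :: "nat \<Rightarrow> nat" and Hs :: "nat \<Rightarrow> graph"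
  assumes "\<forall>j\<in>{1..k}. is_star (Hs j) \<and> order (Hs j) = ns j"
  shows "ramsey_cyc_num k Hs = ramsey_num k Hs"
proof -
  have "ramsey_cyc_prop k Hs = ramsey_prop k Hs"
  proof
    fix N
    show "ramsey_cyc_prop k Hs N = ramsey_prop k Hs N"
      unfolding ramsey_cyc_prop_def ramsey_prop_def
      using star_cyc assms by meson
  qed
  then show ?thesis unfolding ramsey_cyc_num_def ramsey_num_def by simp
qed

end
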